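(* Let $K'\subset K\subset\mathbb{R}^n$, $\delta>0$, $\sigma>0$, and let $\nu_1,\dots,\nu_M\in K'$ be a maximal $\delta$-packing of $K'$ (i.e. $\|\nu_i-\nu_j\|\ge\delta$ for $i\ne j$ and no further point of $K'$ can be added). Suppose $\mu\in K'$ and $Y=\mu+\xi$ with $\xi\sim N(0,\sigma^2\mathbb{I}_n)$, and let $i^*\in\arg\min_i\|Y-\nu_i\|$. Then for any fixed $C>2$, $$\mathbb{P}(\|\nu_{i^*}-\mu\|>(C+1)\delta)\le M\exp\big(-(C-2)^2\delta^2/(8\sigma^2)\big).$$
   Context: $\|\cdot\|$ is the Euclidean norm. *)

theory Defs
  imports "HOL-Probability.Probability"
begin

definition gaussian_iso :: "real \<Rightarrow> (real ^ 'n) measure" where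
  "gaussian_iso \<sigma> = density lborel
     (\<lambda>x. ennreal ((2 * pi * \<sigma>\<^sup>2) powr (- real CARD('n) / 2)
                    * exp (- (norm x)\<^sup>2 / (2 * \<sigma>\<^sup>2))))"

definition maximal_packing :: "('a::metric_space) set \<Rightarrow> real \<Rightarrow> nat \<Rightarrow> (nat \<Rightarrow> 'a) \<Rightarrow> bool" where
  "maximal_packing S \<delta> M \<nu> \<longleftrightarrow>
     (\<forall>i<M. \<nu> i \<in> S) \<and>
     (\<forall>i<M. \<forall>j<M. i \<noteq> j \<longrightarrow> dist (\<nu> i) (\<nu> j) \<ge> \<delta>) \<and>
     (\<forall>x\<in>S. \<exists>i<M. dist x (\<nu> i) < \<delta>)"

end

theory Submission
  imports Defs
begin


lemma powr_half_pow: "(a::real) > 0 \<Longrightarrow> (a powr (- 1 / 2)) ^ n = a powr (- real n / 2)"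
  by (simp add: powr_realpow[symmetric] powr_powr)

lemma gauss_prod:
  fixes x :: "real ^ 'n"
  assumes "\<sigma> > 0"
  shows "(2 * pi * \<sigma>\<^sup>2) powr (- real CARD('n) / 2) * exp (- (norm x)\<^sup>2 / (2 * \<sigma>\<^sup>2))
     = (\<Prod>b\<in>Basis. normal_density 0 \<sigma> (x \<bullet> b))"
proof -
  have a: "2 * pi * \<sigma>\<^sup>2 > 0" using assms by simp
  have "(norm x)\<^sup>2 = x \<bullet> x" by (simp add: power2_norm_eq_inner)
  also have "x \<bullet> x = (\<Sum>b\<in>Basis. (x \<bullet> b)\<^sup>2)"
    by (subst euclidean_inner) (simp add: power2_eq_square)
  finally have "(norm x)\<^sup>2 = (\<Sum>b\<in>Basis. (x \<bullet> b)\<^sup>2)" .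
  then have s: "(\<Sum>b\<in>Basis. - (x \<bullet> b)\<^sup>2 / (2 * \<sigma>\<^sup>2)) = - (norm x)\<^sup>2 / (2 * \<sigma>\<^sup>2)"
    by (simp only: sum_divide_distrib[symmetric] sum_negf)
  have e: "exp (- (norm x)\<^sup>2 / (2 * \<sigma>\<^sup>2)) = (\<Prod>b\<in>Basis. exp (- (x \<bullet> b)\<^sup>2 / (2 * \<sigma>\<^sup>2)))"
    unfolding s[symmetric] by (rule exp_sum) simp
  have c: "(2 * pi * \<sigma>\<^sup>2) powr (- real CARD('n) / 2) = (\<Prod>b\<in>(Basis::(real^'n) set). 1 / sqrt (2 * pi * \<sigma>\<^sup>2))"
  proof -
    have "(2 * pi * \<sigma>\<^sup>2) powr (- real CARD('n) / 2) = ((2 * pi * \<sigma>\<^sup>2) powr (- 1 / 2)) ^ CARD('n)"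
      by (rule powr_half_pow[OF a, symmetric])
    also have "(2 * pi * \<sigma>\<^sup>2) powr (- 1 / 2) = 1 / sqrt (2 * pi * \<sigma>\<^sup>2)"
      using a by (simp add: powr_minus_divide powr_half_sqrt[symmetric])
    also have "(1 / sqrt (2 * pi * \<sigma>\<^sup>2)) ^ CARD('n) = (\<Prod>b\<in>(Basis::(real^'n) set). 1 / sqrt (2 * pi * \<sigma>\<^sup>2))"
      by (simp only: prod_constant DIM_cart DIM_real mult_1_right)
    finally show ?thesis .
  qed
  show ?thesis unfolding e c normal_density_def diff_zero prod.distrib ..
qed

lemma gauss_prob: 
  assumes "\<sigma> > 0"
  shows "prob_space (gaussian_iso \<sigma> :: (real ^ 'n) measure)"
proof
  have "emeasure (gaussian_iso \<sigma> :: (real ^ 'n) measure) (space (gaussian_iso \<sigma>))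
     = (\<integral>\<^sup>+x. (\<Prod>b\<in>Basis. ennreal (normal_density 0 \<sigma> (x \<bullet> b))) \<partial>(lborel :: (real^'n) measure))"
    unfolding gaussian_iso_def
    apply (subst emeasure_density)
      apply (auto intro!: borel_measurable_continuous_onI continuous_intros)[2]
    apply (rule nn_integral_cong)
    apply (simp only: gauss_prod[OF assms] space_lborel indicator_UNIV)
    apply (subst prod_ennreal) 
     apply (simp add: normal_density_nonneg)
    apply simp
    done
  also have "\<dots> = (\<Prod>b\<in>(Basis :: (real^'n) set). (\<integral>\<^sup>+x. ennreal (normal_density 0 \<sigma> x) \<partial>lborel))"
    by (rule nn_integral_lborel_prod) auto
  also have "\<dots> = 1"
  proof -
    have "(\<integral>\<^sup>+x. ennreal (normal_density 0 \<sigma> x) \<partial>lborel) = 1"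
      by (subst nn_integral_eq_integral) (simp_all add: integrable_normal_density[OF assms] integral_normal_density[OF assms])
    then show ?thesis by simp
  qed
  finally show "emeasure (gaussian_iso \<sigma> :: (real ^ 'n) measure) (space (gaussian_iso \<sigma>)) = 1" .
qed



lemma gauss_shift:
  fixes c :: "real ^ 'n"
  assumes s: "\<sigma> > 0" and r: "r \<ge> 0"
  shows "emeasure (gaussian_iso \<sigma>) {x::real^'n. (norm (x - c))\<^sup>2 + r \<le> (norm x)\<^sup>2}
          \<le> ennreal (exp (- r / (2 * \<sigma>\<^sup>2)))"
proof -
  define k where "k = (2 * pi * \<sigma>\<^sup>2) powr (- real CARD('n) / 2)"
  define g :: "real^'n \<Rightarrow> ennreal" where "g x = ennreal (k * exp (- (norm x)\<^sup>2 / (2 * \<sigma>\<^sup>2)))" for x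
  define A where "A = {x::real^'n. (norm (x - c))\<^sup>2 + r \<le> (norm x)\<^sup>2}"
  have G: "gaussian_iso \<sigma> = density lborel g"
    unfolding gaussian_iso_def g_def k_def ..
  have gm[measurable]: "g \<in> borel_measurable borel"
    unfolding g_def by (intro measurable_compose[OF _ measurable_ennreal]) (auto intro!: borel_measurable_continuous_onI continuous_intros)
  have Am[measurable]: "A \<in> sets borel"
    unfolding A_def by measurable
  have k0: "k \<ge> 0" unfolding k_def by simp
  have tot: "(\<integral>\<^sup>+x. g x \<partial>lborel) = 1"
  proof -
    interpret prob_space "gaussian_iso \<sigma> :: (real^'n) measure" by (rule gauss_prob[OF s])
    have "emeasure (gaussian_iso \<sigma> :: (real^'n) measure) (space (gaussian_iso \<sigma>)) = (\<integral>\<^sup>+x. g x \<partial>lborel)"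
      unfolding G by (simp add: emeasure_density)
    then show ?thesis using emeasure_space_1 by simp
  qed
  have "emeasure (gaussian_iso \<sigma>) A = (\<integral>\<^sup>+x. g x * indicator A x \<partial>lborel)"
    unfolding G by (simp add: emeasure_density)
  also have "\<dots> \<le> (\<integral>\<^sup>+x. ennreal (exp (- r / (2 * \<sigma>\<^sup>2))) * g (x - c) \<partial>lborel)"
  proof (rule nn_integral_mono)
    fix x :: "real^'n"
    show "g x * indicator A x \<le> ennreal (exp (- r / (2 * \<sigma>\<^sup>2))) * g (x - c)"
    proof (cases "x \<in> A")
      case True
      then have h: "(norm (x - c))\<^sup>2 + r \<le> (norm x)\<^sup>2" unfolding A_def by simp
      have "- (norm x)\<^sup>2 / (2 * \<sigma>\<^sup>2) \<le> - r / (2 * \<sigma>\<^sup>2) + - (norm (x - c))\<^sup>2 / (2 * \<sigma>\<^sup>2)"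
        using h s by (simp add: field_simps)
      then have "exp (- (norm x)\<^sup>2 / (2 * \<sigma>\<^sup>2)) \<le> exp (- r / (2 * \<sigma>\<^sup>2)) * exp (- (norm (x - c))\<^sup>2 / (2 * \<sigma>\<^sup>2))"
        by (simp add: exp_add[symmetric])
      then have "k * exp (- (norm x)\<^sup>2 / (2 * \<sigma>\<^sup>2)) \<le> exp (- r / (2 * \<sigma>\<^sup>2)) * (k * exp (- (norm (x - c))\<^sup>2 / (2 * \<sigma>\<^sup>2)))"
        using k0 by (metis mult.left_commute mult_left_mono)
      then show ?thesis using True k0
        by (simp add: g_def ennreal_mult''[symmetric] ennreal_leI)
    qed simp
  qed
  also have "\<dots> = ennreal (exp (- r / (2 * \<sigma>\<^sup>2))) * (\<integral>\<^sup>+x. g (x - c) \<partial>lborel)"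
    by (rule nn_integral_cmult) measurable
  also have "(\<integral>\<^sup>+x. g (x - c) \<partial>lborel) = (\<integral>\<^sup>+x. g x \<partial>lborel)"
  proof -
    have "(\<integral>\<^sup>+x. g x \<partial>lborel) = (\<integral>\<^sup>+x. g x \<partial>(distr lborel borel ((+) (- c))))"
      by (simp add: lborel_distr_plus)
    also have "\<dots> = (\<integral>\<^sup>+x. g (- c + x) \<partial>lborel)"
      by (rule nn_integral_distr) auto
    finally show ?thesis by simp
  qed
  finally show ?thesis using tot unfolding A_def by simp
qed



lemma geom:
  fixes x a b :: "real ^ 'n"
  assumes h: "norm (x - a) \<le> norm (x - b)" and ab: "norm a > norm b"
  defines "D \<equiv> (norm a)\<^sup>2 - (norm b)\<^sup>2"
  defines "l \<equiv> D / (2 * (norm (a - b))\<^sup>2)"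
  shows "(norm (x - l *\<^sub>R (a - b)))\<^sup>2 + D\<^sup>2 / (4 * (norm (a - b))\<^sup>2) \<le> (norm x)\<^sup>2"
proof -
  have D0: "D \<ge> 0" unfolding D_def using ab norm_ge_zero by (simp add: power_mono)
  have dpos: "norm (a - b) > 0" using ab by auto
  have "(norm (x - a))\<^sup>2 \<le> (norm (x - b))\<^sup>2" using h by (simp add: power_mono)
  then have "x \<bullet> x - 2 * (x \<bullet> a) + a \<bullet> a \<le> x \<bullet> x - 2 * (x \<bullet> b) + b \<bullet> b"
    by (simp add: power2_norm_eq_inner inner_diff_left inner_diff_right inner_commute)
  then have xd: "2 * (x \<bullet> (a - b)) \<ge> D"
    unfolding D_def by (simp add: power2_norm_eq_inner inner_diff_right)
  have l0: "l \<ge> 0" unfolding l_def using D0 by simp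
  have nd: "(norm (x - y))\<^sup>2 = (norm x)\<^sup>2 - 2 * (x \<bullet> y) + (norm y)\<^sup>2" for y :: "real^'n"
    by (simp add: power2_norm_eq_inner inner_diff_left inner_diff_right inner_commute)
  have "(norm (x - l *\<^sub>R (a - b)))\<^sup>2 = (norm x)\<^sup>2 - 2 * l * (x \<bullet> (a - b)) + l\<^sup>2 * (norm (a - b))\<^sup>2"
    unfolding nd by (simp add: power_mult_distrib)
  also have "\<dots> \<le> (norm x)\<^sup>2 - l * D + l\<^sup>2 * (norm (a - b))\<^sup>2"
    using mult_left_mono[OF xd l0] by simp
  also have "\<dots> = (norm x)\<^sup>2 - D\<^sup>2 / (4 * (norm (a - b))\<^sup>2)"
    unfolding l_def using dpos by (simp add: field_simps power2_eq_square)
  finally show ?thesis by simp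
qed

lemma rbound:
  fixes a b :: "real ^ 'n"
  assumes ab: "norm a > norm b"
  shows "(norm a - norm b)\<^sup>2 / 4 \<le> ((norm a)\<^sup>2 - (norm b)\<^sup>2)\<^sup>2 / (4 * (norm (a - b))\<^sup>2)"
proof -
  have dpos: "norm (a - b) > 0" using ab by auto
  have t: "norm (a - b) \<le> norm a + norm b" by (rule norm_triangle_ineq4)
  have "(norm a)\<^sup>2 - (norm b)\<^sup>2 = (norm a - norm b) * (norm a + norm b)" by (simp add: power2_eq_square algebra_simps)
  also have "\<dots> \<ge> (norm a - norm b) * norm (a - b)" using t ab by (intro mult_left_mono) auto
  finally have q: "(norm a - norm b) * norm (a - b) \<le> (norm a)\<^sup>2 - (norm b)\<^sup>2" .
  have "((norm a - norm b) * norm (a - b))\<^sup>2 \<le> ((norm a)\<^sup>2 - (norm b)\<^sup>2)\<^sup>2"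
    using q ab dpos by (intro power_mono) auto
  then have "((norm a - norm b) * norm (a - b))\<^sup>2 / (4 * (norm (a - b))\<^sup>2) \<le> ((norm a)\<^sup>2 - (norm b)\<^sup>2)\<^sup>2 / (4 * (norm (a - b))\<^sup>2)"
    by (rule divide_right_mono) simp
  moreover have "((norm a - norm b) * norm (a - b))\<^sup>2 / (4 * (norm (a - b))\<^sup>2) = (norm a - norm b)\<^sup>2 / 4"
    using dpos by (simp add: power_mult_distrib)
  ultimately show ?thesis by simp
qed



lemma sets_gauss[simp, measurable_cong]: "sets (gaussian_iso \<sigma> :: (real^'n) measure) = sets borel"
  unfolding gaussian_iso_def by simp

theorem mainTheorem6:
  fixes K K' :: "(real ^ 'n) set" and \<delta> \<sigma> C :: real and M :: nat
    and \<nu> :: "nat \<Rightarrow> real ^ 'n" and \<mu> :: "real ^ 'n"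
    and istar :: "real ^ 'n \<Rightarrow> nat"
  assumes "K' \<subseteq> K" and "\<delta> > 0" and "\<sigma> > 0"
    and "maximal_packing K' \<delta> M \<nu>"
    and "\<mu> \<in> K'"
    and "\<And>y. istar y < M"
    and "\<And>y j. j < M \<Longrightarrow> norm (y - \<nu> (istar y)) \<le> norm (y - \<nu> j)"
    and "istar \<in> borel_measurable borel"
    and "C > 2"
  shows "measure (gaussian_iso \<sigma>) {\<xi>. norm (\<nu> (istar (\<mu> + \<xi>)) - \<mu>) > (C + 1) * \<delta>}
           \<le> M * exp (- (C - 2)\<^sup>2 * \<delta>\<^sup>2 / (8 * \<sigma>\<^sup>2))"
proof -
  note d0 = assms(2) and s0 = assms(3) and ist = assms(6) and opt = assms(7) and C2 = assms(9)
  interpret P: prob_space "gaussian_iso \<sigma> :: (real^'n) measure" by (rule gauss_prob[OF s0])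
  obtain j0 where j0: "j0 < M" "dist \<mu> (\<nu> j0) < \<delta>"
    using assms(4,5) unfolding maximal_packing_def by blast
  define S where "S = {\<xi>. norm (\<nu> (istar (\<mu> + \<xi>)) - \<mu>) > (C + 1) * \<delta>}"
  define B where "B = exp (- (C - 2)\<^sup>2 * \<delta>\<^sup>2 / (8 * \<sigma>\<^sup>2))"
  define b where "b = \<nu> j0 - \<mu>"
  have nb: "norm b < \<delta>" using j0(2) unfolding b_def by (simp add: dist_norm norm_minus_commute)
  define a where "a i = \<nu> i - \<mu>" for i
  define D where "D i = (norm (a i))\<^sup>2 - (norm b)\<^sup>2" for i
  define r where "r i = (D i)\<^sup>2 / (4 * (norm (a i - b))\<^sup>2)" for i
  define c where "c i = (D i / (2 * (norm (a i - b))\<^sup>2)) *\<^sub>R (a i - b)" for i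
  define E where "E i = {x::real^'n. (norm (x - c i))\<^sup>2 + r i \<le> (norm x)\<^sup>2}" for i
  define I where "I = {i. i < M \<and> norm (a i) > (C + 1) * \<delta>}"
  have Em: "E i \<in> sets (gaussian_iso \<sigma>)" for i unfolding E_def by simp
  have big: "norm (a i) > norm b" if "i \<in> I" for i
  proof -
    have "(C + 1) * \<delta> < norm (a i)" using that unfolding I_def by simp
    moreover have "\<delta> \<le> (C + 1) * \<delta>" using C2 d0 by (simp add: algebra_simps)
    ultimately show ?thesis using nb by linarith
  qed
  have rb: "r i \<ge> (C - 2)\<^sup>2 * \<delta>\<^sup>2 / 4" if "i \<in> I" for i
  proof -
    have "r i \<ge> (norm (a i) - norm b)\<^sup>2 / 4" unfolding r_def D_def by (rule rbound[OF big[OF that]])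
    moreover have "norm (a i) - norm b \<ge> (C - 2) * \<delta>"
      using that nb d0 C2 unfolding I_def by (simp add: algebra_simps)
    then have "((C - 2) * \<delta>)\<^sup>2 \<le> (norm (a i) - norm b)\<^sup>2"
      using C2 d0 by (intro power_mono) auto
    ultimately show ?thesis by (simp add: power_mult_distrib)
  qed
  have Eb: "P.prob (E i) \<le> B" if "i \<in> I" for i
  proof -
    have r0: "r i \<ge> 0" unfolding r_def by simp
    have "emeasure (gaussian_iso \<sigma>) (E i) \<le> ennreal (exp (- r i / (2 * \<sigma>\<^sup>2)))"
      unfolding E_def by (rule gauss_shift[OF s0 r0])
    moreover have "exp (- r i / (2 * \<sigma>\<^sup>2)) \<le> B"
      unfolding B_def using rb[OF that] s0 by (simp add: field_simps)
    ultimately have "emeasure (gaussian_iso \<sigma>) (E i) \<le> ennreal B"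
      by (meson ennreal_leI order_trans)
    then show ?thesis by (simp add: P.emeasure_eq_measure B_def)
  qed
  have sub: "S \<subseteq> (\<Union>i\<in>I. E i)"
  proof
    fix x assume "x \<in> S"
    define i where "i = istar (\<mu> + x)"
    have iI: "i \<in> I" using \<open>x \<in> S\<close> ist unfolding S_def I_def a_def i_def by auto
    have "norm (\<mu> + x - \<nu> i) \<le> norm (\<mu> + x - \<nu> j0)" unfolding i_def using opt[OF j0(1)] .
    then have "norm (x - a i) \<le> norm (x - b)" unfolding a_def b_def by (simp add: algebra_simps)
    from geom[OF this big[OF iI]] have "x \<in> E i" unfolding E_def c_def r_def D_def by simp
    then show "x \<in> (\<Union>i\<in>I. E i)" using iI by blast
  qed
  have fin: "finite I" unfolding I_def by simp
  show ?thesis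
  proof (cases "S \<in> sets (gaussian_iso \<sigma>)")
    case False
    then have "measure (gaussian_iso \<sigma>) S = 0" by (simp add: measure_notin_sets)
    then show ?thesis unfolding S_def by simp
  next
    case True
    have "P.prob S \<le> P.prob (\<Union>i\<in>I. E i)"
      using sub Em fin by (intro P.finite_measure_mono) auto
    also have "\<dots> \<le> (\<Sum>i\<in>I. P.prob (E i))"
      using Em fin by (intro measure_UNION_le) auto
    also have "\<dots> \<le> (\<Sum>i\<in>I. B)" using Eb by (intro sum_mono) auto
    also have "\<dots> = card I * B" by simp
    also have "\<dots> \<le> M * B"
    proof -
      have "card I \<le> card {..<M}" unfolding I_def by (intro card_mono) auto
      then show ?thesis unfolding B_def by (intro mult_right_mono) auto
    qed
    finally show ?thesis unfolding S_def B_def .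
  qed
qed

end
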